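(* For $x\in(0,27/4)$ define \begin{align*} V(x)=&\frac{\sqrt{3}}{2^{10/3}\pi x^{2/3}}\left(3\sqrt{1-4x/27}-1\right)\left(1+\sqrt{1-4x/27}\right)^{1/3}\\ &+\frac{1}{2^{8/3}\pi x^{1/3}\sqrt{3}}\left(3\sqrt{1-4x/27}+1\right)\left(1+\sqrt{1-4x/27}\right)^{-1/3}. \end{align*} Then for every integer $n\ge0$, \[ \int_0^{27/4}x^nV(x)\,dx=\binom{3n}{n}\frac{1}{n+1}. \] Consequently $V$ is the density of the unique probability measure $\mu_0$ on $\mathbb{R}$ whose moments are $\binom{3n}{n}\frac{1}{n+1}$, $n\ge0$. *)

theory Defs
  imports "HOL-Probability.Probability"
begin

definition V :: "real \<Rightarrow> real" where
  "V x = sqrt 3 / (2 powr (10/3) * pi * x powr (2/3))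
           * (3 * sqrt (1 - 4 * x / 27) - 1) * (1 + sqrt (1 - 4 * x / 27)) powr (1/3)
       + 1 / (2 powr (8/3) * pi * x powr (1/3) * sqrt 3)
           * (3 * sqrt (1 - 4 * x / 27) + 1) * (1 + sqrt (1 - 4 * x / 27)) powr (-1/3)"

definition mu0 :: "real measure" where
  "mu0 = density lborel (\<lambda>x. ennreal (indicator {0<..<27/4} x * V x))"

end

theory Submission
  imports Defs
begin
definition W :: "real \<Rightarrow> real" where "W t = (1-t)*(1+t)^3/(12 * sqrt 3 * pi * t^2)"
definition phi :: "real \<Rightarrow> real" where "phi t = 27*t^3/(1+t^3)^2"
lemma e: "(1-t^3)^2 = (1+t^3)^2 - 4*(t::real)^3" by (simp add: power2_eq_square algebra_simps)
lemma f: "1+t^3 > 0 \<Longrightarrow> 1 - 4*phi t/27 = ((1+t^3)^2 - 4*t^3)/(1+t^3)^2" by (simp add: phi_def diff_divide_distrib)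
lemma sqrt_phi: assumes "0 \<le> t" "t \<le> 1" shows "sqrt (1 - 4*phi t/27) = (1-t^3)/(1+t^3)"
proof -
  have q: "1+t^3 > 0" using assms by (simp add: add_pos_nonneg)
  have "1 - 4*phi t/27 = ((1-t^3)/(1+t^3))^2"
    unfolding f[OF q] e[symmetric] power_divide ..
  moreover have "1-t^3 \<ge> 0" using assms by (simp add: power_le_one)
  ultimately show ?thesis using q by simp
qed

lemma cube_powr: "0 < (b::real) \<Longrightarrow> (b^3) powr r = b powr (3*r)"
proof -
  assume b: "0 < b"
  have "b^3 = b powr 3" using powr_realpow[OF b, of 3] by simp
  then show ?thesis by (simp add: powr_powr)
qed

lemma V_phi: assumes "0 < t" "t < 1" shows "V (phi t) = W t"
proof -
  define q where "q = 1+t^3"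
  have q: "q > 0" using assms by (simp add: q_def add_pos_nonneg)
  define u where "u = q powr (1/3)"
  define a where "a = (2::real) powr (1/3)"
  have cub: "y^3 = x" if "x > 0" "y = x powr (1/3)" for x y :: real
  proof -
    have y0: "y > 0" using that by simp
    have "y^3 = y powr 3" using powr_realpow[OF y0, of 3] by simp
    also have "... = x" using that by (simp add: powr_powr)
    finally show ?thesis .
  qed
  have u: "u > 0" "u^3 = q" using q cub u_def by auto
  have a: "a > 0" "a^3 = 2" using cub a_def by auto
  have ph: "phi t = (3*t/u^2)^3"
  proof -
    have "(3*t/u^2)^3 = 27*t^3/(u^3)^2" by (simp add: power_divide power_mult_distrib flip: power_mult)
    then show ?thesis using u by (simp add: phi_def q_def)
  qed
  have p: "0 < 3*t/u^2" using u assms by simp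
  have ph1: "phi t powr (1/3) = 3*t/u^2" using cube_powr[OF p, of "1/3"] ph assms by simp
  have ph2: "phi t powr (2/3) = (3*t/u^2)^2" using cube_powr[OF p, of "2/3"] ph p powr_realpow[OF p, of 2] by simp
  have os: "1 + (1-t^3)/q = (a/u)^3" using a u q by (simp add: q_def field_simps power_divide)
  have p2: "0 < a/u" using a u by simp
  have os1: "(1 + (1-t^3)/q) powr (1/3) = a/u" using cube_powr[OF p2, of "1/3"] os a u by simp
  have os2: "(1 + (1-t^3)/q) powr (-1/3) = u/a" using cube_powr[OF p2, of "-1/3"] os p2 a u by (simp add: powr_minus_divide)
  have t1: "(2::real) powr (10/3) = 8*a"
  proof -
    have "(2::real) powr (10/3) = 2 powr (3 + 1/3)" by simp
    also have "... = 2 powr 3 * 2 powr (1/3)" by (rule powr_add)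
    also have "(2::real) powr 3 = 2^3" using powr_realpow[of 2 3] by simp
    finally show ?thesis by (simp add: a_def)
  qed
  have t2: "(2::real) powr (8/3) = 4*a^2"
  proof -
    have "(2::real) powr (8/3) = 2 powr (2 + 2/3)" by simp
    also have "... = 2 powr 2 * 2 powr (2/3)" by (rule powr_add)
    also have "(2::real) powr 2 = 2^2" using powr_realpow[of 2 2] by simp
    also have "(2::real) powr (2/3) = a powr 2" by (simp add: a_def powr_powr)
    also have "a powr 2 = a^2" using powr_realpow[OF a(1), of 2] by simp
    finally show ?thesis by simp
  qed
  have s: "sqrt (1 - 4*phi t/27) = (1-t^3)/q" using sqrt_phi assms by (simp add: q_def)
  have e1: "sqrt 3 / (8*a * pi * (3*t/u^2)^2) * (3 * ((1-t^3)/q) - 1) * (a/u) = sqrt 3*(1-2*t^3)/(36*pi*t^2)"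
  proof -
    have "sqrt 3 / (8*a * pi * (3*t/u^2)^2) * (3 * ((1-t^3)/q) - 1) * (a/u) = sqrt 3 * u^3 * (3 * ((1-t^3)/q) - 1)/(72*pi*t^2)"
      using u a q assms by (simp add: field_simps power2_eq_square power3_eq_cube)
    also have "... = sqrt 3 * (3*(1-t^3) - q)/(72*pi*t^2)" using u q assms by (simp add: field_simps)
    also have "... = sqrt 3*(1-2*t^3)/(36*pi*t^2)" using assms by (simp add: q_def field_simps)
    finally show ?thesis .
  qed
  have e2: "1 / (4*a^2 * pi * (3*t/u^2) * sqrt 3) * (3 * ((1-t^3)/q) + 1) * (u/a) = (2-t^3)/(12*pi*t* sqrt 3)"
  proof -
    have "1 / (4*a^2 * pi * (3*t/u^2) * sqrt 3) * (3 * ((1-t^3)/q) + 1) * (u/a) = u^3 * (3 * ((1-t^3)/q) + 1)/(12*a^3*pi*t* sqrt 3)"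
      using u(1) a(1) q assms by (simp add: field_simps power2_eq_square power3_eq_cube)
    also have "... = (3*(1-t^3) + q)/(24*pi*t* sqrt 3)" unfolding u(2) a(2) using q assms by (simp add: field_simps)
    also have "... = (2-t^3)/(12*pi*t* sqrt 3)" using assms by (simp add: q_def field_simps)
    finally show ?thesis .
  qed
  have e3: "sqrt 3*(1-2*t^3)/(36*pi*t^2) + (2-t^3)/(12*pi*t* sqrt 3) = W t"
  proof -
    have s3: "sqrt 3 * (sqrt 3 * x) = 3 * x" for x by (simp flip: mult.assoc)
    have "sqrt 3*(1-2*t^3)/(36*pi*t^2) = (1-2*t^3)/(12*pi*t^2 * sqrt 3)"
      using assms by (simp add: field_simps s3)
    moreover have "(1-2*t^3)/(12*pi*t^2 * sqrt 3) + (2-t^3)/(12*pi*t* sqrt 3) = W t"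
      using assms unfolding W_def by (simp add: field_simps) (simp add: s3 algebra_simps eval_nat_numeral)
    ultimately show ?thesis by simp
  qed
  show ?thesis unfolding V_def s ph1 ph2 os1 os2 t1 t2 using e1 e2 e3 by (simp add: mult.assoc)
qed

definition T :: "real \<Rightarrow> real" where
  "T x = root 3 ((1 - sqrt (1-4*x/27))/(1 + sqrt (1-4*x/27)))"

lemma T_props: assumes "0 \<le> x" "x \<le> 27/4"
  shows "0 \<le> T x" "T x \<le> 1" "phi (T x) = x"
proof -
  define s where "s = sqrt (1-4*x/27)"
  have s0: "0 \<le> s" "s \<le> 1" using assms by (auto simp: s_def)
  have ss: "s^2 = 1-4*x/27" using assms by (simp add: s_def)
  define y where "y = (1-s)/(1+s)"
  have y: "0 \<le> y" "y \<le> 1" using s0 by (auto simp: y_def field_simps)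
  have Ty: "T x = root 3 y" by (simp add: T_def y_def s_def)
  show "0 \<le> T x" "T x \<le> 1" using y Ty by auto
  have T3: "T x ^ 3 = y" using y Ty by simp
  have "phi (T x) = 27*y/(1+y)^2" by (simp add: phi_def T3)
  also have "... = 27*(1-s)*(1+s)/4" using s0 by (simp add: y_def field_simps power2_eq_square)
  also have "... = 27*(1-s^2)/4" by (simp add: algebra_simps power2_eq_square)
  also have "... = x" using ss by simp
  finally show "phi (T x) = x" .
qed

lemma T_open: assumes "0 < x" "x < 27/4" shows "0 < T x" "T x < 1"
proof -
  define s where "s = sqrt (1-4*x/27)"
  have s0: "0 < s" "s < 1" using assms by (auto simp: s_def)
  define y where "y = (1-s)/(1+s)"
  have y: "0 < y" "y < 1" using s0 by (auto simp: y_def field_simps)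
  have Ty: "T x = root 3 y" by (simp add: T_def y_def s_def)
  show "0 < T x" "T x < 1" using y Ty by (auto intro: real_root_gt_zero)
qed

lemma T_0: "T 0 = 0" by (simp add: T_def)
lemma T_end: "T (27/4) = 1" by (simp add: T_def)

lemma sq_ne: "x \<le> 27/4 \<Longrightarrow> 1 + sqrt (1-4*x/27) \<noteq> 0"
proof -
  assume "x \<le> 27/4"
  then have "sqrt (1-4*x/27) \<ge> 0" by simp
  then show ?thesis by linarith
qed

lemma T_cont: "continuous_on {0..27/4} T"
proof -
  have "continuous_on {0..27/4} (\<lambda>x. root 3 ((1 - sqrt (1-4*x/27))/(1 + sqrt (1-4*x/27))))"
    by (intro continuous_intros) (auto simp: sq_ne)
  then show ?thesis unfolding T_def[abs_def] .
qed

lemma T_isCont: "x < 27/4 \<Longrightarrow> isCont T x"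
proof -
  assume that: "x < 27/4"
  have "isCont (\<lambda>x. root 3 ((1 - sqrt (1-4*x/27))/(1 + sqrt (1-4*x/27)))) x"
    using that by (intro continuous_intros) (auto simp: sq_ne)
  then show ?thesis unfolding T_def[abs_def] .
qed

definition dphi :: "real \<Rightarrow> real" where "dphi t = 81*t^2*(1-t^3)/(1+t^3)^3"

lemma phi_deriv: assumes "0 \<le> t" shows "(phi has_real_derivative dphi t) (at t)"
proof -
  have q: "1+t^3 > 0" using assms by (simp add: add_pos_nonneg)
  have "((\<lambda>t. 27*t^3/(1+t^3)^2) has_real_derivative
      (27*(3*t^2)*(1+t^3)^2 - 27*t^3*(2*(1+t^3)*(3*t^2)))/((1+t^3)^2)^2) (at t)"
    using q by (auto intro!: derivative_eq_intros simp: power2_eq_square)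
  moreover have "(27*(3*t^2)*(1+t^3)^2 - 27*t^3*(2*(1+t^3)*(3*t^2)))/((1+t^3)^2)^2 = dphi t"
    using q by (simp add: dphi_def field_simps) (simp add: algebra_simps eval_nat_numeral)
  ultimately show ?thesis by (simp add: phi_def[abs_def])
qed

lemma T_deriv: assumes "0 < x" "x < 27/4" shows "(T has_real_derivative inverse (dphi (T x))) (at x)"
proof (rule DERIV_inverse_function[where a=0 and b="27/4"])
  show "(phi has_real_derivative dphi (T x)) (at (T x))" using phi_deriv T_open[OF assms] by simp
  have "T x ^ 3 < 1" "T x ^ 3 > 0" using T_open[OF assms] by (simp_all add: power_less_one_iff)
  moreover have "1 + T x ^ 3 \<noteq> 0" using \<open>T x ^ 3 > 0\<close> by linarith
  ultimately show "dphi (T x) \<noteq> 0" using T_open[OF assms] by (simp add: dphi_def)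
  show "\<And>y. 0 < y \<Longrightarrow> y < 27/4 \<Longrightarrow> phi (T y) = y" using T_props by simp
qed (use assms T_isCont in auto)

lemma V_T: assumes "0 < x" "x < 27/4" shows "V x = W (T x)"
  using V_phi[OF T_open[OF assms]] T_props[of x] assms by simp

definition Pn :: "real \<Rightarrow> real \<Rightarrow> real" where
 "Pn r t = 3/4*(-(3*r+2)*(1-t^10) - 2*(3*r+1)*(t-t^9) + 4*(3*r+1)*(t^3-t^7) + 5*(3*r+2)*(t^4-t^6))"
definition dPn :: "real \<Rightarrow> real \<Rightarrow> real" where
 "dPn r t = 3/4*((3*r+2)*(10*t^9) - 2*(3*r+1)*(1-9*t^8) + 4*(3*r+1)*(3*t^2-7*t^6) + 5*(3*r+2)*(4*t^3-6*t^5))"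
lemma Pn_deriv: "(Pn r has_real_derivative dPn r t) (at t)"
  unfolding Pn_def[abs_def] dPn_def by (auto intro!: derivative_eq_intros simp: algebra_simps)
lemma Pn_id: "4*((3*r+1)*Pn r t*(1+t^3) + t*dPn r t*(1+t^3) - 6*(r+2)*t^3*Pn r t)
  = (27*(2*(r+2)*(2*r+1))*t^3 - 3*(3*r+1)*(3*r+2)*(1+t^3)^2)*(1-t)*(1+t)^3*(1-t^3)"
  unfolding Pn_def dPn_def by algebra

definition G :: "real \<Rightarrow> real \<Rightarrow> real" where "G r t = t * Pn r t / (1+t^3)^4"
definition dG :: "real \<Rightarrow> real \<Rightarrow> real" where
  "dG r t = ((Pn r t + t*dPn r t)*(1+t^3) - 12*t^3*Pn r t)/(1+t^3)^5"

lemma G_deriv: assumes "0 \<le> t" shows "(G r has_real_derivative dG r t) (at t)"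
proof -
  have q: "1+t^3 > 0" using assms by (simp add: add_pos_nonneg)
  have "(G r has_real_derivative ((Pn r t + t*dPn r t)*(1+t^3)^4 - t*Pn r t*(4*(1+t^3)^3*(3*t^2)))/((1+t^3)^4)^2) (at t)"
    unfolding G_def[abs_def] using q
    by (auto intro!: derivative_eq_intros Pn_deriv simp: algebra_simps)
  moreover have "((Pn r t + t*dPn r t)*(1+t^3)^4 - t*Pn r t*(4*(1+t^3)^3*(3*t^2)))/((1+t^3)^4)^2 = dG r t"
    using q unfolding dG_def by (simp add: field_simps) algebra
  ultimately show ?thesis by simp
qed

lemma key: assumes "0 < t"
  shows "r*dphi t*G r t + phi t*dG r t = phi t*(2*(r+2)*(2*r+1)*phi t - 3*(3*r+1)*(3*r+2))*((1-t)*(1+t)^3/(12*t^2))*dphi t/27"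
proof -
  have q: "1+t^3 > 0" using assms by (simp add: add_pos_nonneg)
  have id: "4*((3*r+1)*Pn r t*(1+t^3) + t*dPn r t*(1+t^3) - 6*(r+2)*t^3*Pn r t)
  = (27*(2*(r+2)*(2*r+1))*t^3 - 3*(3*r+1)*(3*r+2)*(1+t^3)^2)*(1-t)*(1+t)^3*(1-t^3)" by (rule Pn_id)
  show ?thesis using q assms unfolding dphi_def G_def dG_def phi_def
    apply (simp add: field_simps)
    using id by algebra
qed

definition K :: "nat \<Rightarrow> real \<Rightarrow> real" where
  "K n t = 27/(sqrt 3 * pi) * (phi t ^ n * G (real n) t)"

lemma K_deriv: assumes "0 < t" "t < 1"
  shows "(K n has_real_derivative
     ((2*(real n+2)*(2*real n+1)*phi t - 3*(3*real n+1)*(3*real n+2)) * phi t ^ n * W t * dphi t)) (at t)"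
proof -
  let ?r = "real n"
  have q: "1+t^3 > 0" using assms by (simp add: add_pos_nonneg)
  have ph: "phi t > 0" using assms q by (simp add: phi_def)
  have d: "(K n has_real_derivative 27/(sqrt 3 * pi) * (?r * phi t^(n-1) * dphi t * G ?r t + phi t^n * dG ?r t)) (at t)"
    unfolding K_def[abs_def] using assms
    by (auto intro!: derivative_eq_intros phi_deriv G_deriv)
  have pn: "?r * phi t^(n-1) = ?r * phi t^n / phi t" using ph by (cases n) auto
  have "27/(sqrt 3 * pi) * (?r * phi t^(n-1) * dphi t * G ?r t + phi t^n * dG ?r t)
     = 27/(sqrt 3 * pi) * (phi t^n / phi t) * (?r * dphi t * G ?r t + phi t * dG ?r t)"
    using ph unfolding pn by (simp add: field_simps)
  also have "... = 27/(sqrt 3 * pi) * (phi t^n / phi t) * (phi t*(2*(?r+2)*(2*?r+1)*phi t - 3*(3*?r+1)*(3*?r+2))*((1-t)*(1+t)^3/(12*t^2))*dphi t/27)"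
    unfolding key[OF assms(1)] ..
  also have "... = (2*(?r+2)*(2*?r+1)*phi t - 3*(3*?r+1)*(3*?r+2)) * phi t ^ n * W t * dphi t"
    using ph assms unfolding W_def by (simp add: field_simps)
  finally show ?thesis using d by simp
qed

lemma K_cont: "continuous_on {0..1} (K n)"
  unfolding K_def[abs_def] phi_def G_def Pn_def
  by (intro continuous_intros) (auto simp: add_nonneg_eq_0_iff)

lemma K_0: "K n 0 = 0" by (simp add: K_def G_def)
lemma K_1: "K n 1 = 0" by (simp add: K_def G_def Pn_def)

lemma rec_int: "((\<lambda>x. (2*(real n+2)*(2*real n+1)*x - 3*(3*real n+1)*(3*real n+2)) * x^n * V x) has_integral 0) {0..27/4}"
proof -
  have "((\<lambda>x. (2*(real n+2)*(2*real n+1)*x - 3*(3*real n+1)*(3*real n+2)) * x^n * V x) has_integral (K n (T (27/4)) - K n (T 0))) {0..27/4}"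
  proof (rule fundamental_theorem_of_calculus_interior)
    show "continuous_on {0..27/4} (\<lambda>x. K n (T x))"
      by (rule continuous_on_compose2[OF K_cont T_cont]) (auto simp: T_props)
  next
    fix x :: real assume x: "x \<in> {0<..<27/4}"
    then have x0: "0 < x" "x < 27/4" by auto
    have "((\<lambda>x. K n (T x)) has_real_derivative
        ((2*(real n+2)*(2*real n+1)*phi (T x) - 3*(3*real n+1)*(3*real n+2)) * phi (T x) ^ n * W (T x) * dphi (T x)) * inverse (dphi (T x))) (at x)"
      by (rule DERIV_chain2[OF K_deriv[OF T_open[OF x0]] T_deriv[OF x0]])
    moreover have "dphi (T x) \<noteq> 0"
    proof -
      have "T x ^ 3 < 1" "T x ^ 3 > 0" using T_open[OF x0] by (simp_all add: power_less_one_iff)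
      moreover have "1 + T x ^ 3 \<noteq> 0" using \<open>T x ^ 3 > 0\<close> by linarith
      ultimately show "dphi (T x) \<noteq> 0" using T_open[OF x0] by (simp add: dphi_def)
    qed
    ultimately have "((\<lambda>x. K n (T x)) has_real_derivative
        ((2*(real n+2)*(2*real n+1)*x - 3*(3*real n+1)*(3*real n+2)) * x^n * V x)) (at x)"
      using T_props[of x] x0 V_T[OF x0] by (simp add: mult.assoc)
    then show "((\<lambda>x. K n (T x)) has_vector_derivative
        ((2*(real n+2)*(2*real n+1)*x - 3*(3*real n+1)*(3*real n+2)) * x^n * V x)) (at x)"
      by (simp add: has_real_derivative_iff_has_vector_derivative)
  qed simp
  then show ?thesis by (simp add: T_0 T_end K_0 K_1)
qed


definition A :: "real \<Rightarrow> real" where "A t = arctan((2*t-1)/sqrt 3)"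

definition K0 :: "real \<Rightarrow> real" where
  "K0 t = (9/4*(t - t^3)/(t^2-t+1)^2 + 3 * sqrt 3 * A t)/(sqrt 3 * pi)"

lemma r_pos: "t^2 - t + 1 > (0::real)"
proof -
  have "t^2 - t + 1 = (t - 1/2)^2 + 3/4" by (simp add: power2_eq_square algebra_simps)
  moreover have "(t - 1/2)^2 \<ge> 0" by simp
  ultimately show ?thesis by linarith
qed

lemma atan_deriv: "(A has_real_derivative (sqrt 3/2)/(t^2-t+1)) (at t within S)"
proof -
  have inner: "((\<lambda>t. (2*t-1)/sqrt 3) has_real_derivative 2/sqrt 3) (at t within S)"
    by (auto intro!: derivative_eq_intros simp: field_simps)
  have "(A has_real_derivative inverse (1 + ((2*t-1)/sqrt 3)^2) * (2/sqrt 3)) (at t within S)"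
    unfolding A_def[abs_def] by (rule DERIV_chain2[OF DERIV_arctan inner])
  moreover have "inverse (1 + ((2*t-1)/sqrt 3)^2) * (2/sqrt 3) = (sqrt 3/2)/(t^2-t+1)"
  proof -
    have s3: "sqrt 3 ^ 2 = 3" by simp
    have hX: "1 + ((2*t-1)/sqrt 3)^2 = 4*(t^2-t+1)/3" unfolding power_divide s3 by (simp add: field_simps power2_eq_square)
    have gen: "inverse (4*rr/3) * (2/ss) = (3/ss)/(2*rr)" if "rr \<noteq> 0" "ss \<noteq> 0" for rr ss :: real
      using that by (simp add: field_simps)
    have "inverse (4*(t^2-t+1)/3) * (2/sqrt 3) = (3/sqrt 3)/(2*(t^2-t+1))"
      using r_pos[of t] by (intro gen) auto
    also have "3 / sqrt 3 = sqrt 3" by (metis real_div_sqrt zero_le_numeral)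
    finally have "inverse (4*(t^2-t+1)/3) * (2/sqrt 3) = (sqrt 3/2)/(t^2-t+1)" by simp
    then show ?thesis unfolding hX .
  qed
  ultimately show ?thesis by simp
qed

lemma rat_id: assumes "rr \<noteq> 0" "q \<noteq> 0" "rr = t^2-t+1" "q = 1+t^3"
  shows "(9/4*(1 - 3*t^2)*rr^2 - 9/4*(t - t^3)*(2*rr*(2*t-1)))/(rr^2)^2 + 9/(2*rr) = 81*(1-t)*(1+t)^3*(1-t^3)/(12*(q::real)^3)"
  using assms(1,2) apply (simp add: field_simps)
  using assms(3,4) by algebra

lemma K0_deriv: assumes "0 < t" "t < 1" shows "(K0 has_real_derivative W t * dphi t) (at t)"
proof -
  have r: "t^2-t+1 > 0" by (rule r_pos)
  have q: "1+t^3 > 0" using assms by (simp add: add_pos_nonneg)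
  let ?R = "(9/4*(1 - 3*t^2)*(t^2-t+1)^2 - 9/4*(t - t^3)*(2*(t^2-t+1)*(2*t-1)))/((t^2-t+1)^2)^2"
  have dR: "((\<lambda>t. 9/4*(t - t^3)/(t^2-t+1)^2) has_real_derivative ?R) (at t)"
    using r apply (auto intro!: derivative_eq_intros simp: power2_eq_square)
    by (simp add: field_simps)
  have d: "(K0 has_real_derivative (?R + 3 * sqrt 3 * ((sqrt 3/2)/(t^2-t+1)))/(sqrt 3 * pi)) (at t)"
    unfolding K0_def[abs_def] 
    by (intro DERIV_cdivide DERIV_add dR DERIV_cmult atan_deriv)
  have e1: "3 * sqrt 3 * ((sqrt 3/2)/(t^2-t+1)) = 9/(2*(t^2-t+1))"
    by (simp add: field_simps)
  have e2: "?R + 9/(2*(t^2-t+1)) = 81*(1-t)*(1+t)^3*(1-t^3)/(12*(1+t^3)^3)"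
    using rat_id[of "t^2-t+1" "1+t^3" t] r q by simp
  have e3: "W t * dphi t = 81*(1-t)*(1+t)^3*(1-t^3)/(12*(1+t^3)^3) / (sqrt 3 * pi)"
    using assms q unfolding W_def dphi_def by (simp add: field_simps)
  have "(?R + 3 * sqrt 3 * ((sqrt 3/2)/(t^2-t+1)))/(sqrt 3 * pi) = W t * dphi t"
    unfolding e1 e2 e3 ..
  with d show ?thesis by simp
qed

lemma arctan_30: "arctan (1 / sqrt 3) = pi/6"
  using arctan_tan[of "pi/6"] tan_30 by simp

lemma K0_vals: "K0 1 - K0 0 = 1"
proof -
  have "K0 1 = 3 * sqrt 3 * (pi/6)/(sqrt 3 * pi)" unfolding K0_def A_def using arctan_30 by simp
  moreover have "K0 0 = 3 * sqrt 3 * (-pi/6)/(sqrt 3 * pi)" unfolding K0_def A_def using arctan_30 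
    by (simp add: arctan_minus)
  ultimately show ?thesis by simp
qed

lemma base_int: "(V has_integral 1) {0..27/4}"
proof -
  have "(V has_integral (K0 (T (27/4)) - K0 (T 0))) {0..27/4}"
  proof (rule fundamental_theorem_of_calculus_interior)
    show "continuous_on {0..27/4} (\<lambda>x. K0 (T x))"
    proof (rule continuous_on_compose2[OF _ T_cont])
      show "continuous_on {0..1} K0" unfolding K0_def[abs_def] A_def using r_pos
        by (intro continuous_intros) (auto simp: less_le)
    qed (auto simp: T_props)
  next
    fix x :: real assume x: "x \<in> {0<..<27/4}"
    then have x0: "0 < x" "x < 27/4" by auto
    have "((\<lambda>x. K0 (T x)) has_real_derivative (W (T x) * dphi (T x)) * inverse (dphi (T x))) (at x)"
      by (rule DERIV_chain2[OF K0_deriv[OF T_open[OF x0]] T_deriv[OF x0]])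
    moreover have "dphi (T x) \<noteq> 0"
    proof -
      have "T x ^ 3 < 1" "T x ^ 3 > 0" using T_open[OF x0] by (simp_all add: power_less_one_iff)
      moreover have "1 + T x ^ 3 \<noteq> 0" using \<open>T x ^ 3 > 0\<close> by linarith
      ultimately show "dphi (T x) \<noteq> 0" using T_open[OF x0] by (simp add: dphi_def)
    qed
    ultimately have "((\<lambda>x. K0 (T x)) has_real_derivative V x) (at x)"
      using V_T[OF x0] by (simp add: mult.assoc)
    then show "((\<lambda>x. K0 (T x)) has_vector_derivative V x) (at x)"
      by (simp add: has_real_derivative_iff_has_vector_derivative)
  qed simp
  then show ?thesis using K0_vals by (simp add: T_0 T_end)
qed


lemma binom_rec: "real ((3*(n+1)) choose (n+1)) / real (n+2) * (2*(real n+2)*(2*real n+1))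
   = 3*(3*real n+1)*(3*real n+2) * (real ((3*n) choose n)/real (n+1))"
proof -
  define X where "X = real ((3*(n+1)) choose (n+1))"
  define Y where "Y = real ((3*n) choose n)"
  have eX: "fact (n+1) * fact (2*n+2) * X = (fact (3*n+3)::real)"
  proof -
    have h: "fact (n+1) * fact (3*(n+1) - (n+1)) * ((3*(n+1)) choose (n+1)) = fact (3*(n+1))"
      by (rule binomial_fact_lemma) simp
    have e1: "3*(n+1) - (n+1) = 2*n+2" by simp
    have e2: "3*(n+1) = 3*n+3" by simp
    from h have "fact (n+1) * fact (2*n+2) * ((3*(n+1)) choose (n+1)) = fact (3*n+3)" unfolding e1 by (simp only: e2)
    then have "real (fact (n+1) * fact (2*n+2) * ((3*(n+1)) choose (n+1))) = real (fact (3*n+3))" by (simp only:)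
    then show ?thesis unfolding X_def of_nat_mult of_nat_fact .
  qed
  have eY: "fact n * fact (2*n) * Y = (fact (3*n)::real)"
  proof -
    have "fact n * fact (3*n - n) * ((3*n) choose n) = fact (3*n)"
      by (rule binomial_fact_lemma) simp
    moreover have "3*n - n = 2*n" by simp
    ultimately have "fact n * fact (2*n) * ((3*n) choose n) = fact (3*n)" by (simp only:)
    then have "real (fact n * fact (2*n) * ((3*n) choose n)) = real (fact (3*n))" by (simp only:)
    then show ?thesis unfolding Y_def of_nat_mult of_nat_fact .
  qed
  have f1: "(fact (3*n+3)::real) = (3*real n+3)*(3*real n+2)*(3*real n+1)*fact (3*n)"
  proof -
    have "3*n+3 = Suc (Suc (Suc (3*n)))" by simp
    then show ?thesis by (simp only: fact_Suc) (simp add: algebra_simps)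
  qed
  have f2: "(fact (2*n+2)::real) = (2*real n+2)*(2*real n+1)*fact (2*n)"
  proof -
    have "2*n+2 = Suc (Suc (2*n))" by simp
    then show ?thesis by (simp only: fact_Suc) (simp add: algebra_simps)
  qed
  have f3: "(fact (n+1)::real) = (real n+1)*fact n" by (simp add: algebra_simps)
  have main: "X*(2*real n+2)*(2*real n+1) * ((real n+1) * fact n * fact (2*n)) = 3*(3*real n+1)*(3*real n+2) * Y * ((real n+1) * fact n * fact (2*n))"
    using eX eY unfolding f1 f2 f3 by algebra
  have nz: "(real n+1) * fact n * fact (2*n) \<noteq> 0" by simp
  have m2: "X*(2*real n+2)*(2*real n+1) = 3*(3*real n+1)*(3*real n+2) * Y"
    using main nz by simp
  have "X / real (n+2) * (2*(real n+2)*(2*real n+1)) = X * (2*(2*real n+1))" by (simp add: field_simps)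
  also have "... = (X*(2*real n+2)*(2*real n+1)) / (real n + 1)" by (simp add: field_simps)
  also have "... = 3*(3*real n+1)*(3*real n+2) * (Y/real (n+1))" unfolding m2 by simp
  finally show ?thesis unfolding X_def Y_def .
qed

lemma moments: "((\<lambda>x. x^n * V x) has_integral (real ((3*n) choose n)/real (n+1))) {0..27/4}"
proof (induction n)
  case 0
  then show ?case using base_int by simp
next
  case (Suc n)
  define a where "a = 2*(real n+2)*(2*real n+1)"
  define b where "b = 3*(3*real n+1)*(3*real n+2)"
  define m where "m = real ((3*n) choose n)/real (n+1)"
  have a0: "a \<noteq> 0" unfolding a_def by simp
  have h1: "((\<lambda>x. (a*x - b) * x^n * V x) has_integral 0) {0..27/4}"
    using rec_int[of n] unfolding a_def b_def .
  have h2: "((\<lambda>x. b * (x^n * V x)) has_integral (b * m)) {0..27/4}"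
    using has_integral_mult_right[OF Suc.IH[folded m_def]] .
  have "((\<lambda>x. (a*x - b) * x^n * V x + b * (x^n * V x)) has_integral (0 + b * m)) {0..27/4}"
    by (rule has_integral_add[OF h1 h2])
  then have h3: "((\<lambda>x. inverse a * ((a*x - b) * x^n * V x + b * (x^n * V x))) has_integral (inverse a * (0 + b * m))) {0..27/4}"
    by (rule has_integral_mult_right)
  have f: "inverse a * ((a*x - b) * x^n * V x + b * (x^n * V x)) = x^Suc n * V x" for x
  proof -
    have "(a*x - b) * x^n * V x + b * (x^n * V x) = a * (x^Suc n * V x)" by (simp add: algebra_simps)
    then show ?thesis using a0 by simp
  qed
  have v: "inverse a * (0 + b * m) = real ((3*Suc n) choose Suc n)/real (Suc n+1)"
  proof -
    have "real ((3*(n+1)) choose (n+1)) / real (n+2) * a = b * m" using binom_rec[of n] unfolding a_def b_def m_def .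
    then show ?thesis using a0 by (simp add: field_simps)
  qed
  show ?case using h3 unfolding f v .
qed


lemma V_nonneg: "x \<in> {0<..<27/4} \<Longrightarrow> 0 \<le> V x"
proof -
  assume "x \<in> {0<..<27/4}"
  then have x: "0 < x" "x < 27/4" by auto
  have t: "0 < T x" "T x < 1" using T_open[OF x] by auto
  have "0 \<le> W (T x)" using t unfolding W_def by (intro divide_nonneg_pos mult_nonneg_nonneg) auto
  then show ?thesis using V_T[OF x] by simp
qed

lemma V_nonneg': "0 < x \<Longrightarrow> x < 27/4 \<Longrightarrow> 0 \<le> V x" using V_nonneg by simp

lemma V_meas[measurable]: "V \<in> borel_measurable borel"
  unfolding V_def[abs_def] by measurable

lemma moments_open: "((\<lambda>x. x^n * V x) has_integral (real ((3*n) choose n)/real (n+1))) {0<..<27/4}"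
proof -
  have e: "((\<lambda>x. x^n * V x) has_integral (real ((3*n) choose n)/real (n+1))) (box 0 (27/4))
     = ((\<lambda>x. x^n * V x) has_integral (real ((3*n) choose n)/real (n+1))) (cbox 0 (27/4))"
    by (rule has_integral_open_interval)
  show ?thesis using moments[of n] e unfolding box_real cbox_interval by simp
qed

lemma nn_mom: "(\<integral>\<^sup>+x. ennreal (indicator {0<..<27/4} x * V x * x^n) \<partial>lborel) = ennreal (real ((3*n) choose n)/real (n+1))"
proof -
  have "(\<integral>\<^sup>+x. ennreal (x^n * V x) * indicator {0<..<27/4} x \<partial>lborel) = ennreal (real ((3*n) choose n)/real (n+1))"
    by (rule nn_integral_has_integral_lebesgue'[OF _ moments_open]) (auto intro!: mult_nonneg_nonneg V_nonneg')
  moreover have "(\<integral>\<^sup>+x. ennreal (indicator {0<..<27/4} x * V x * x^n) \<partial>lborel) = (\<integral>\<^sup>+x. ennreal (x^n * V x) * indicator {0<..<27/4} x \<partial>lborel)"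
    by (intro nn_integral_cong) (auto simp: indicator_def mult.commute)
  ultimately show ?thesis by simp
qed

lemma mu0_prob: "prob_space mu0"
proof (rule prob_spaceI)
  have "emeasure mu0 (space mu0) = (\<integral>\<^sup>+x. ennreal (indicator {0<..<27/4} x * V x) * indicator UNIV x \<partial>lborel)"
    unfolding mu0_def by (subst emeasure_density) auto
  also have "... = (\<integral>\<^sup>+x. ennreal (indicator {0<..<27/4} x * V x * x^0) \<partial>lborel)" by simp
  also have "... = 1" unfolding nn_mom by simp
  finally show "emeasure mu0 (space mu0) = 1" .
qed

lemma mu0_sets: "sets mu0 = sets borel" unfolding mu0_def by simp

lemma mu0_moments: "integrable mu0 (\<lambda>x. x ^ n) \<and> (\<integral>x. x ^ n \<partial>mu0) = real ((3 * n) choose n) / real (n + 1)"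
proof -
  let ?g = "\<lambda>x. indicator {0<..<27/4} x * V x :: real"
  have g0: "AE x in lborel. 0 \<le> ?g x" by (intro AE_I2) (auto simp: indicator_def intro!: V_nonneg')
  have nn: "AE x in lborel. 0 \<le> ?g x * x^n" by (intro AE_I2) (auto simp: indicator_def intro!: V_nonneg' mult_nonneg_nonneg)
  have "integrable lborel (\<lambda>x. ?g x * x^n)"
    by (rule integrableI_nonneg) (use nn nn_mom in auto)
  then have i: "integrable mu0 (\<lambda>x. x ^ n)" unfolding mu0_def
    using integrable_density[of "\<lambda>x. x^n" lborel ?g] g0 by simp
  have "(\<integral>x. x ^ n \<partial>mu0) = (\<integral>x. ?g x * x^n \<partial>lborel)" unfolding mu0_def
    using integral_density[of "\<lambda>x. x^n" lborel ?g] g0 by simp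
  also have "... = enn2real (\<integral>\<^sup>+x. ennreal (?g x * x^n) \<partial>lborel)"
    by (rule integral_eq_nn_integral) (use nn in auto)
  also have "... = real ((3 * n) choose n) / real (n + 1)" unfolding nn_mom by simp
  finally show ?thesis using i by simp
qed

lemma approx_int:
  fixes M :: "real measure" and f :: "real \<Rightarrow> real"
  assumes "real_distribution M" "\<And>n. integrable M (\<lambda>x. x^n)" "AE x in M. \<bar>x\<bar> \<le> c"
    "\<And>x. isCont f x" "\<And>x. \<bar>f x\<bar> \<le> 1"
    "\<And>x. x \<in> {-c..c} \<Longrightarrow> \<bar>f x - (\<Sum>i\<le>k. a i * x^i)\<bar> < e"
  shows "\<bar>(\<integral>x. f x \<partial>M) - (\<Sum>i\<le>k. a i * (\<integral>x. x^i \<partial>M))\<bar> \<le> e"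
proof -
  interpret real_distribution M by fact
  have "f \<in> borel_measurable borel"
    by (intro borel_measurable_continuous_onI continuous_at_imp_continuous_on) (use assms(4) in auto)
  then have fm: "f \<in> borel_measurable M" using measurable_cong_sets[OF events_eq_borel refl] by simp
  have fi: "integrable M f"
    by (rule integrable_const_bound[where B=1]) (use assms(5) fm in auto)
  have gi: "integrable M (\<lambda>x. \<Sum>i\<le>k. a i * x^i)" using assms(2) by auto
  have gint: "(\<integral>x. (\<Sum>i\<le>k. a i * x^i) \<partial>M) = (\<Sum>i\<le>k. a i * (\<integral>x. x^i \<partial>M))"
    using assms(2) by (simp add: integral_sum)
  let ?h = "\<lambda>x. f x - (\<Sum>i\<le>k. a i * x^i)"
  have hi: "integrable M ?h" using fi gi by auto
  have ae: "AE x in M. \<bar>?h x\<bar> \<le> e"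
    using assms(3)
  proof eventually_elim
    fix x assume "\<bar>x\<bar> \<le> c"
    then have "x \<in> {-c..c}" by auto
    then show "\<bar>?h x\<bar> \<le> e" using assms(6) less_imp_le by blast
  qed
  have "(\<integral>x. ?h x \<partial>M) \<le> (\<integral>x. e \<partial>M)"
    by (rule integral_mono_AE[OF hi]) (use ae in \<open>auto\<close>)
  moreover have "(\<integral>x. -e \<partial>M) \<le> (\<integral>x. ?h x \<partial>M)"
    by (rule integral_mono_AE[OF _ hi]) (use ae in \<open>auto\<close>)
  moreover have "(\<integral>x. ?h x \<partial>M) = (\<integral>x. f x \<partial>M) - (\<Sum>i\<le>k. a i * (\<integral>x. x^i \<partial>M))"
    using fi gi gint by simp
  moreover have "prob UNIV = 1" using prob_space sets_eq_imp_space_eq[OF events_eq_borel] by simp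
  ultimately show ?thesis by (simp add: abs_le_iff)
qed


lemma int_eq_cont:
  fixes M N :: "real measure" and f :: "real \<Rightarrow> real"
  assumes M: "real_distribution M" and N: "real_distribution N"
    and iM: "\<And>n. integrable M (\<lambda>x. x^n)" and iN: "\<And>n. integrable N (\<lambda>x. x^n)"
    and eq: "\<And>n. (\<integral>x. x^n \<partial>M) = (\<integral>x. x^n \<partial>N)"
    and bM: "AE x in M. \<bar>x\<bar> \<le> c" and bN: "AE x in N. \<bar>x\<bar> \<le> c"
    and f: "\<And>x. isCont f x" and fb: "\<And>x. \<bar>f x\<bar> \<le> 1"
  shows "(\<integral>x. f x \<partial>M) = (\<integral>x. f x \<partial>N)"
proof (rule ccontr)
  let ?d = "\<bar>(\<integral>x. f x \<partial>M) - (\<integral>x. f x \<partial>N)\<bar>"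
  assume ne: "(\<integral>x. f x \<partial>M) \<noteq> (\<integral>x. f x \<partial>N)"
  then have d0: "?d > 0" by simp
  define e where "e = ?d / 4"
  have e0: "e > 0" using d0 by (simp add: e_def)
  have "continuous_on {-c..c} f" using f by (intro continuous_at_imp_continuous_on) auto
  then obtain g where g: "real_polynomial_function g" "\<And>x. x \<in> {-c..c} \<Longrightarrow> \<bar>f x - g x\<bar> < e"
    using Stone_Weierstrass_real_polynomial_function[of "{-c..c}" f e] e0 by auto
  then obtain a k where gk: "g = (\<lambda>x. \<Sum>i\<le>k. a i * x^i)"
    using real_polynomial_function_iff_sum by metis
  have ap: "\<And>x. x \<in> {-c..c} \<Longrightarrow> \<bar>f x - (\<Sum>i\<le>k. a i * x^i)\<bar> < e" using g(2) gk by simp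
  have h1: "\<bar>(\<integral>x. f x \<partial>M) - (\<Sum>i\<le>k. a i * (\<integral>x. x^i \<partial>M))\<bar> \<le> e"
    by (rule approx_int[OF M iM bM f fb ap])
  have h2: "\<bar>(\<integral>x. f x \<partial>N) - (\<Sum>i\<le>k. a i * (\<integral>x. x^i \<partial>N))\<bar> \<le> e"
    by (rule approx_int[OF N iN bN f fb ap])
  have "(\<Sum>i\<le>k. a i * (\<integral>x. x^i \<partial>M)) = (\<Sum>i\<le>k. a i * (\<integral>x. x^i \<partial>N))" using eq by simp
  then have "?d \<le> 2*e" using h1 h2 by linarith
  then show False using d0 e_def by simp
qed

lemma cdf_le:
  fixes M N :: "real measure"
  assumes M: "real_distribution M" and N: "real_distribution N"
    and eqs: "\<And>x y. x < y \<Longrightarrow> (\<integral>z. cts_step x y z \<partial>M) = (\<integral>z. cts_step x y z \<partial>N)"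
  shows "cdf M x \<le> cdf N x"
proof -
  have le: "cdf M x \<le> cdf N y" if "x < y" for y
  proof -
    have "cdf M x \<le> (\<integral>z. cts_step x y z \<partial>M)" using real_distribution.cdf_cts_step(1)[OF M that] by simp
    also have "... = (\<integral>z. cts_step x y z \<partial>N)" using eqs[OF that] .
    also have "... \<le> cdf N y" using real_distribution.cdf_cts_step(2)[OF N that] by simp
    finally show ?thesis .
  qed
  have "(cdf N \<longlongrightarrow> cdf N x) (at_right x)"
    using finite_borel_measure.cdf_is_right_cont[OF real_distribution.finite_borel_measure_M[OF N]]
    unfolding continuous_within .
  moreover have "eventually (\<lambda>y. cdf M x \<le> cdf N y) (at_right x)"
    using eventually_at_right_less[of x] by eventually_elim (rule le)
  ultimately show ?thesis
    by (intro tendsto_lowerbound[of "cdf N" "cdf N x" "at_right x" "cdf M x"]) (auto simp: trivial_limit_at_right_real)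
qed


lemma cts_step_props: assumes "x < y" shows "isCont (cts_step x y) z" "\<bar>cts_step x y z\<bar> \<le> 1"
proof -
  have "continuous_on UNIV (cts_step x y)"
    by (rule uniformly_continuous_imp_continuous[OF cts_step_uniformly_continuous[OF assms]])
  then show "isCont (cts_step x y) z" by (simp add: continuous_on_eq_continuous_at)
  show "\<bar>cts_step x y z\<bar> \<le> 1" using assms by (auto simp: cts_step_def field_simps)
qed

lemma moment_unique:
  fixes M N :: "real measure"
  assumes M: "real_distribution M" and N: "real_distribution N"
    and iM: "\<And>n. integrable M (\<lambda>x. x^n)" and iN: "\<And>n. integrable N (\<lambda>x. x^n)"
    and eq: "\<And>n. (\<integral>x. x^n \<partial>M) = (\<integral>x. x^n \<partial>N)"
    and bM: "AE x in M. \<bar>x\<bar> \<le> c" and bN: "AE x in N. \<bar>x\<bar> \<le> c"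
  shows "M = N"
proof -
  have i: "(\<integral>z. cts_step x y z \<partial>M) = (\<integral>z. cts_step x y z \<partial>N)" if "x < y" for x y
    by (rule int_eq_cont[OF M N iM iN eq bM bN]) (use cts_step_props[OF that] in auto)
  have "cdf M x \<le> cdf N x" for x by (rule cdf_le[OF M N i])
  moreover have "cdf N x \<le> cdf M x" for x by (rule cdf_le[OF N M i[symmetric]])
  ultimately have "cdf M = cdf N" by (intro ext antisym)
  then show ?thesis by (rule cdf_unique[OF M N])
qed


lemma support:
  fixes M :: "real measure"
  assumes M: "real_distribution M" and iM: "\<And>n. integrable M (\<lambda>x. x^n)"
    and bd: "\<And>n. (\<integral>x. x^n \<partial>M) \<le> c^n" and c0: "c > 0"
  shows "AE x in M. \<bar>x\<bar> \<le> c"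
proof -
  interpret real_distribution M by fact
  have null: "measure M {x\<in>space M. r \<le> \<bar>x\<bar>} = 0" if r: "r > c" for r
  proof -
    have r0: "r > 0" using r c0 by simp
    have le: "measure M {x\<in>space M. r \<le> \<bar>x\<bar>} \<le> ((c/r)^2)^(Suc k)" for k
    proof -
      define m where "m = 2*Suc k"
      have em: "even m" "m > 0" by (simp_all add: m_def)
      have set_eq: "{x\<in>space M. r^m \<le> x^m} = {x\<in>space M. r \<le> \<bar>x\<bar>}"
      proof -
        have "r^m \<le> x^m \<longleftrightarrow> r \<le> \<bar>x\<bar>" for x
        proof -
          have "x^m = \<bar>x\<bar>^m" using em(1) by (simp add: power_even_abs)
          moreover have "r^m \<le> \<bar>x\<bar>^m \<longleftrightarrow> r \<le> \<bar>x\<bar>"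
            using r0 em by (intro power_mono_iff) auto
          ultimately show ?thesis by simp
        qed
        then show ?thesis by auto
      qed
      have "measure M {x\<in>space M. r^m \<le> x^m} \<le> (\<integral>x. x^m \<partial>M) / r^m"
        by (rule integral_Markov_inequality_measure[OF iM[of m] _ AE_I2]) (use r0 em in \<open>auto intro: zero_le_even_power\<close>)
      also have "... \<le> c^m / r^m" using bd[of m] r0 by (simp add: divide_right_mono)
      also have "... = ((c/r)^2)^(Suc k)" unfolding m_def by (simp only: power_divide power_mult)
      finally show ?thesis using set_eq by simp
    qed
    have lim: "(\<lambda>k. ((c/r)^2)^(Suc k)) \<longlonglongrightarrow> 0"
    proof -
      have "\<bar>(c/r)^2\<bar> < 1" using r c0 r0 by (simp add: power_less_one_iff abs_less_iff divide_less_eq_1)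
      then have "(\<lambda>k. ((c/r)^2)^k) \<longlonglongrightarrow> 0" by (intro LIMSEQ_power_zero) simp
      then show ?thesis by (rule LIMSEQ_Suc)
    qed
    have "measure M {x\<in>space M. r \<le> \<bar>x\<bar>} \<le> 0"
      by (rule LIMSEQ_le_const[OF lim]) (use le in auto)
    then show ?thesis using measure_nonneg[of M] by (simp add: antisym)
  qed
  have ae: "AE x in M. \<bar>x\<bar> < c + 1/Suc k" for k
  proof (rule AE_I[where N="{x\<in>space M. c + 1/Suc k \<le> \<bar>x\<bar>}"])
    show "{x\<in>space M. c + 1/Suc k \<le> \<bar>x\<bar>} \<in> events" by measurable
    then show "emeasure M {x\<in>space M. c + 1/Suc k \<le> \<bar>x\<bar>} = 0"
      using null[of "c + 1/Suc k"] by (simp add: emeasure_eq_measure)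
  qed auto
  then have "AE x in M. \<forall>k. \<bar>x\<bar> < c + 1/Suc k" by (simp add: AE_all_countable)
  then show ?thesis
  proof eventually_elim
    fix x assume h: "\<forall>k. \<bar>x\<bar> < c + 1/Suc k"
    show "\<bar>x\<bar> \<le> c"
    proof (rule ccontr)
      assume "\<not> \<bar>x\<bar> \<le> c"
      then have "\<bar>x\<bar> - c > 0" by simp
      then obtain k where "inverse (real (Suc k)) < \<bar>x\<bar> - c" using reals_Archimedean by blast
      then have "1/Suc k < \<bar>x\<bar> - c" by (simp add: inverse_eq_divide)
      then show False using h[rule_format, of k] by simp
    qed
  qed
qed


lemma a_bound: "real ((3*n) choose n)/real (n+1) \<le> (27/4)^n"
proof (induction n)
  case 0
  then show ?case by simp
next
  case (Suc n)
  define a where "a = 2*(real n+2)*(2*real n+1)"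
  define b where "b = 3*(3*real n+1)*(3*real n+2)"
  define m where "m = real ((3*n) choose n)/real (n+1)"
  define m' where "m' = real ((3*(n+1)) choose (n+1)) / real (n+2)"
  have a0: "a > 0" unfolding a_def by simp
  have m0: "m \<ge> 0" unfolding m_def by simp
  have rec: "m' * a = b * m" using binom_rec[of n] unfolding a_def b_def m_def m'_def .
  have ba: "b \<le> 27/4 * a" unfolding a_def b_def by (simp add: algebra_simps)
  have bm: "b * m \<le> (27/4 * a) * m" by (rule mult_right_mono[OF ba m0])
  have "m' * a \<le> (27/4 * m) * a" unfolding rec using bm by (simp add: mult_ac)
  then have "m' \<le> 27/4 * m" using a0 by simp
  also have "... \<le> 27/4 * (27/4)^n" using Suc.IH unfolding m_def by (intro mult_left_mono) auto
  finally show ?case unfolding m'_def by simp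
qed

theorem mainTheorem4:
  shows "(\<forall>n::nat. ((\<lambda>x. x ^ n * V x) has_integral
              (real ((3 * n) choose n) / real (n + 1))) {0..27/4})
     \<and> (\<forall>x\<in>{0<..<27/4}. 0 \<le> V x)
     \<and> prob_space mu0
     \<and> (\<forall>n::nat. integrable mu0 (\<lambda>x. x ^ n)
              \<and> (\<integral>x. x ^ n \<partial>mu0) = real ((3 * n) choose n) / real (n + 1))
     \<and> (\<forall>M :: real measure. prob_space M \<and> sets M = sets borel
          \<and> (\<forall>n::nat. integrable M (\<lambda>x. x ^ n)
               \<and> (\<integral>x. x ^ n \<partial>M) = real ((3 * n) choose n) / real (n + 1))
          \<longrightarrow> M = mu0)"
proof (intro conjI allI ballI impI)
  show "((\<lambda>x. x ^ n * V x) has_integral (real ((3 * n) choose n) / real (n + 1))) {0..27/4}" for n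
    by (rule moments)
  show "0 \<le> V x" if "x \<in> {0<..<27/4}" for x using V_nonneg that .
  show "prob_space mu0" by (rule mu0_prob)
  show "integrable mu0 (\<lambda>x. x ^ n)" for n using mu0_moments by blast
  show "(\<integral>x. x ^ n \<partial>mu0) = real ((3 * n) choose n) / real (n + 1)" for n using mu0_moments by blast
next
  fix M :: "real measure"
  assume h: "prob_space M \<and> sets M = sets borel \<and> (\<forall>n::nat. integrable M (\<lambda>x. x ^ n)
               \<and> (\<integral>x. x ^ n \<partial>M) = real ((3 * n) choose n) / real (n + 1))"
  have RM: "real_distribution M" using h unfolding real_distribution_def real_distribution_axioms_def by simp
  have RN: "real_distribution mu0" using mu0_prob mu0_sets unfolding real_distribution_def real_distribution_axioms_def by simp
  have iM: "\<And>n. integrable M (\<lambda>x. x^n)" using h by simp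
  have iN: "\<And>n. integrable mu0 (\<lambda>x. x^n)" using mu0_moments by simp
  have eq: "\<And>n. (\<integral>x. x^n \<partial>M) = (\<integral>x. x^n \<partial>mu0)" using h mu0_moments by simp
  have bM: "AE x in M. \<bar>x\<bar> \<le> 27/4"
    by (rule support[OF RM iM]) (use h a_bound in auto)
  have bN: "AE x in mu0. \<bar>x\<bar> \<le> 27/4"
    by (rule support[OF RN iN]) (use mu0_moments a_bound in auto)
  show "M = mu0" by (rule moment_unique[OF RM RN iM iN eq bM bN])
qed

end
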